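(* Let $H$ be a complex Hilbert space with $\dim H=2$, let $u\in H$ be a unit vector and $P=|u\rangle\langle u|$ the corresponding rank-one orthogonal projection, and let $R\in B(H)_+$. Define $R_0:=R$ and $R_{n+1}:=R_n^{1/2}(I-P)R_n^{1/2}$ for $n\ge0$. Then $R_n$ converges in norm to $$R_\infty=\begin{cases}0, & \text{if } PR\neq RP,\\ R^{1/2}(I-P)R^{1/2}=(I-P)R(I-P), & \text{if } PR=RP.\end{cases}$$
   Context: For vectors $x,y$, $|x\rangle\langle y|$ denotes the operator $z\mapsto\langle y,z\rangle x$. $B(H)_+$ denotes the positive bounded operators on $H$, and $R^{1/2}$ is the positive square root. *)

theory Defs
  imports "HOL-Analysis.Analysis"
begin

text \<open>The 2-dimensional complex Hilbert space H is modelled as complex^2 with the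
standard inner product (antilinear in the first argument); operators on H are
2x2 complex matrices acting via *v.\<close>

definition cinner :: "complex^'n \<Rightarrow> complex^'n \<Rightarrow> complex" where
  "cinner x y = (\<Sum>i\<in>UNIV. cnj (x $ i) * y $ i)"

definition ketbra :: "complex^'n \<Rightarrow> complex^'n \<Rightarrow> complex^'n^'n" where
  "ketbra x y = (\<chi> i j. x $ i * cnj (y $ j))"

definition pos_op :: "complex^'n^'n \<Rightarrow> bool" where
  "pos_op A \<longleftrightarrow> (\<forall>x. cinner x (A *v x) \<in> \<real> \<and> 0 \<le> Re (cinner x (A *v x)))"

definition op_sqrt :: "complex^'n^'n \<Rightarrow> complex^'n^'n" where
  "op_sqrt A = (THE B. pos_op B \<and> B ** B = A)"

definition opnorm :: "complex^'n^'n \<Rightarrow> real" where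
  "opnorm A = onorm (\<lambda>x. A *v x)"

primrec Rseq :: "complex^'n^'n \<Rightarrow> complex^'n^'n \<Rightarrow> nat \<Rightarrow> complex^'n^'n" where
  "Rseq P R 0 = R"
| "Rseq P R (Suc n) = op_sqrt (Rseq P R n) ** (mat 1 - P) ** op_sqrt (Rseq P R n)"

end

theory Submission
  imports Defs
begin


definition vec2 :: "'a \<Rightarrow> 'a \<Rightarrow> 'a^2" where "vec2 p q = (\<chi> i. if i = 1 then p else q)"
lemma vec2_nth[simp]: "vec2 p q $ 1 = p" "vec2 p q $ 2 = q"
  by (simp_all add: vec2_def)

lemma mat2_eq: "(A::'a^2^2) = B \<longleftrightarrow> A$1$1 = B$1$1 \<and> A$1$2 = B$1$2 \<and> A$2$1 = B$2$1 \<and> A$2$2 = B$2$2"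
  by (auto simp: vec_eq_iff forall_2)
lemma vec2_eq: "(x::'a^2) = y \<longleftrightarrow> x$1 = y$1 \<and> x$2 = y$2" by (auto simp: vec_eq_iff forall_2)
lemma mm2: "((A::'a::semiring_1^2^2) ** (B::'a^2^2))$i$j = A$i$1 * B$1$j + A$i$2 * B$2$j"
  by (simp add: matrix_matrix_mult_def sum_2)
lemma mv2: "((A::'a::semiring_1^2^2) *v x)$i = A$i$1 * x$1 + A$i$2 * x$2"
  by (simp add: matrix_vector_mult_def sum_2)
lemma cinner2: "cinner (x::complex^2) y = cnj (x$1) * y$1 + cnj (x$2) * y$2"
  by (simp add: cinner_def sum_2)
lemma ketbra_nth[simp]: "ketbra x y $ i $ j = x$i * cnj (y$j)" by (simp add: ketbra_def)
lemma mat1_2[simp]: "(mat 1 :: 'a::zero_neq_one^2^2)$1$1 = 1" "(mat 1 :: 'a::zero_neq_one^2^2)$2$2 = 1"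
   "(mat 1 :: 'a::zero_neq_one^2^2)$1$2 = 0" "(mat 1 :: 'a::zero_neq_one^2^2)$2$1 = 0"
  by (simp_all add: mat_def)
lemma norm2: "norm (x::complex^2)^2 = cmod (x$1)^2 + cmod (x$2)^2"
  by (simp add: norm_vec_def L2_set_def sum_2 sum_nonneg)
lemma cinner_self: "cinner (x::complex^2) x = of_real (norm x ^2)"
  unfolding cinner2 norm2 of_real_add complex_norm_square by (simp add: mult.commute)
lemma smult_nth: "((c::complex) *s x)$i = c * x$i" by simp

lemma cmod_sq: "cmod z * cmod z = Re z * Re z + Im z * Im z"
  using cmod_power2[of z] by (simp add: power2_eq_square)
lemma qf2: "cinner x ((A::complex^2^2) *v x) = cnj(x$1)*(A$1$1*x$1 + A$1$2*x$2) + cnj(x$2)*(A$2$1*x$1 + A$2$2*x$2)"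
  by (simp add: cinner2 mv2)

lemma quad_disc:
  fixes a d B :: real
  assumes "a \<ge> 0" "d \<ge> 0" "B \<ge> 0" "\<And>r. 0 \<le> a*r^2 - 2*r*B + d*B"
  shows "B \<le> a*d"
proof (cases "a = 0")
  case True
  have "0 \<le> a*(d+1)^2 - 2*(d+1)*B + d*B" by (rule assms(4))
  with True have "0 \<le> -(d+2)*B" by (simp add: algebra_simps)
  then have "(d+2)*B \<le> 0" by (simp add: algebra_simps)
  moreover have "d + 2 > 0" using assms by simp
  ultimately have "B \<le> 0" by (simp add: mult_le_0_iff)
  with assms have "B = 0" by simp
  then show ?thesis using assms by simp
next
  case False
  then have a: "a > 0" using assms by simp
  have "0 \<le> a*(B/a)^2 - 2*(B/a)*B + d*B" by (rule assms(4))
  also have "\<dots> = B * (d - B/a)" using a by (simp add: power2_eq_square field_simps)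
  finally have "0 \<le> B * (d - B/a)" .
  show ?thesis
  proof (cases "B = 0")
    case True then show ?thesis using assms by simp
  next
    case False
    with assms have "B > 0" by simp
    with \<open>0 \<le> B * (d - B/a)\<close> have "B/a \<le> d"
      by (simp add: zero_le_mult_iff)
    then show ?thesis using a by (simp add: divide_le_eq mult.commute)
  qed
qed

lemma amgm2:
  fixes a d P Q c :: real
  assumes "a \<ge> 0" "d \<ge> 0" "P \<ge> 0" "Q \<ge> 0" "c \<ge> 0" "c^2 \<le> a*d"
  shows "2*c*P*Q \<le> a*P^2 + d*Q^2"
proof -
  have "(2*c*P*Q)^2 = 4*c^2*(P^2*Q^2)" by (simp add: power_mult_distrib)
  also have "\<dots> \<le> 4*(a*d)*(P^2*Q^2)"
    by (rule mult_right_mono) (use assms(6) in simp_all)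
  also have "\<dots> \<le> (a*P^2 + d*Q^2)^2"
  proof -
    have i: "(a*P^2 + d*Q^2)^2 = 4*(a*d)*(P^2*Q^2) + (a*P^2 - d*Q^2)^2"
      by (simp add: power2_eq_square algebra_simps)
    show ?thesis unfolding i by simp
  qed
  finally have *: "(2*c*P*Q)^2 \<le> (a*P^2 + d*Q^2)^2" .
  have "0 \<le> a*P^2 + d*Q^2" using assms by simp
  from power2_le_imp_le[OF * this] show ?thesis .
qed

lemma pos_char:
  fixes A :: "complex^2^2"
  shows "pos_op A \<longleftrightarrow> (Im (A$1$1) = 0 \<and> Im (A$2$2) = 0 \<and> A$2$1 = cnj (A$1$2) \<and>
     0 \<le> Re (A$1$1) \<and> 0 \<le> Re (A$2$2) \<and> cmod (A$1$2)^2 \<le> Re (A$1$1) * Re (A$2$2))"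
    (is "?L \<longleftrightarrow> ?R")
proof
  assume p: ?L
  have h: "\<And>x. cinner x (A *v x) \<in> \<real> \<and> 0 \<le> Re (cinner x (A *v x))"
    using p unfolding pos_op_def by blast
  have h1: "Im (A$1$1) = 0" "0 \<le> Re (A$1$1)" using h[of "vec2 1 0"] by (simp_all add: qf2 complex_is_Real_iff)
  have h2: "Im (A$2$2) = 0" "0 \<le> Re (A$2$2)" using h[of "vec2 0 1"] by (simp_all add: qf2 complex_is_Real_iff)
  have h3: "Im (A$1$2) + Im (A$2$1) = 0" using h[of "vec2 1 1"] h1 h2 by (simp add: qf2 complex_is_Real_iff)
  have h4: "Re (A$1$2) - Re (A$2$1) = 0" using h[of "vec2 1 \<i>"] h1 h2 by (simp add: qf2 complex_is_Real_iff)
  have h21: "A$2$1 = cnj (A$1$2)" using h3 h4 by (simp add: complex_eq_iff)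
  define a where "a = Re (A$1$1)"
  define d where "d = Re (A$2$2)"
  define b where "b = A$1$2"
  have A11: "A$1$1 = of_real a" using h1 by (simp add: a_def complex_eq_iff)
  have A22: "A$2$2 = of_real d" using h2 by (simp add: d_def complex_eq_iff)
  have "\<And>r. 0 \<le> a*r^2 - 2*r*(cmod b)^2 + d*(cmod b)^2"
  proof -
    fix r :: real
    have e: "cinner (vec2 (of_real r) (- cnj b)) (A *v vec2 (of_real r) (- cnj b)) =
      of_real (a*r^2 - 2*r*(cmod b)^2 + d*(cmod b)^2)"
      unfolding qf2 A11 A22 h21 b_def[symmetric]
      by (simp add: complex_eq_iff cmod_sq algebra_simps power2_eq_square)
    show "0 \<le> a*r^2 - 2*r*(cmod b)^2 + d*(cmod b)^2"
      using h[of "vec2 (of_real r) (- cnj b)"] unfolding e by simp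
  qed
  from quad_disc[OF _ _ _ this] h1 h2 have "(cmod b)^2 \<le> a*d" by (simp add: a_def d_def)
  then show ?R using h1 h2 h21 by (simp add: a_def d_def b_def)
next
  assume r: ?R
  define a where "a = Re (A$1$1)"
  define d where "d = Re (A$2$2)"
  define b where "b = A$1$2"
  have A11: "A$1$1 = of_real a" using r by (simp add: a_def complex_eq_iff)
  have A22: "A$2$2 = of_real d" using r by (simp add: d_def complex_eq_iff)
  show ?L unfolding pos_op_def
  proof
    fix x :: "complex^2"
    define z where "z = b * cnj (x$1) * x$2"
    have e: "cinner x (A *v x) = of_real (a * (cmod (x$1))^2 + d * (cmod (x$2))^2 + 2 * Re z)"
      using r unfolding qf2 A11 A22 b_def[symmetric] z_def
      by (simp add: complex_eq_iff cmod_sq algebra_simps power2_eq_square)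
    have "2 * cmod z \<le> a * (cmod (x$1))^2 + d * (cmod (x$2))^2"
      using amgm2[of a d "cmod (x$1)" "cmod (x$2)" "cmod b"] r
      by (simp add: z_def norm_mult a_def d_def b_def mult.assoc)
    moreover have "- cmod z \<le> Re z" using abs_Re_le_cmod[of z] by linarith
    ultimately show "cinner x (A *v x) \<in> \<real> \<and> 0 \<le> Re (cinner x (A *v x))"
      unfolding e by simp
  qed
qed

lemma pos_entries:
  fixes B :: "complex^2^2"
  assumes "pos_op B"
  shows "B$1$1 = of_real (Re (B$1$1))" "B$2$2 = of_real (Re (B$2$2))" "B$2$1 = cnj (B$1$2)"
  using assms unfolding pos_char by (simp_all add: complex_eq_iff)

lemma sqB:
  fixes B :: "complex^2^2"
  assumes "pos_op B"
  shows "(B**B)$1$1 = of_real (Re (B$1$1)^2 + cmod (B$1$2)^2)"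
    "(B**B)$2$2 = of_real (Re (B$2$2)^2 + cmod (B$1$2)^2)"
    "(B**B)$1$2 = of_real (Re (B$1$1) + Re (B$2$2)) * B$1$2"
    "(B**B)$2$1 = of_real (Re (B$1$1) + Re (B$2$2)) * cnj (B$1$2)"
proof -
  note e = pos_entries[OF assms]
  show "(B**B)$1$1 = of_real (Re (B$1$1)^2 + cmod (B$1$2)^2)"
    unfolding mm2 e(3) by (subst (1 2) e(1)) (simp add: complex_eq_iff cmod_sq algebra_simps power2_eq_square)
  show "(B**B)$2$2 = of_real (Re (B$2$2)^2 + cmod (B$1$2)^2)"
    unfolding mm2 e(3) by (subst (1 2) e(2)) (simp add: complex_eq_iff cmod_sq algebra_simps power2_eq_square)
  show "(B**B)$1$2 = of_real (Re (B$1$1) + Re (B$2$2)) * B$1$2"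
    unfolding mm2 e(3) by (subst (1) e(1), subst (1) e(2)) (simp add: algebra_simps)
  show "(B**B)$2$1 = of_real (Re (B$1$1) + Re (B$2$2)) * cnj (B$1$2)"
    unfolding mm2 e(3) by (subst (1) e(1), subst (1) e(2)) (simp add: algebra_simps)
qed

lemma sq_unique_real:
  fixes a d a' d' X X' :: real
  assumes "X \<le> a*d" "X' \<le> a'*d'" "a \<ge> 0" "d \<ge> 0" "a' \<ge> 0" "d' \<ge> 0"
    and E1: "a^2 + X = a'^2 + X'" and E2: "d^2 + X = d'^2 + X'"
    and E3: "(a+d)^2 * X = (a'+d')^2 * X'"
  shows "a + d = a' + d'"
proof -
  have k1: "(a*d - X)^2 = (a^2+X)*(d^2+X) - X*(a+d)^2" by (simp add: power2_eq_square algebra_simps)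
  have k2: "(a'*d' - X')^2 = (a'^2+X')*(d'^2+X') - X'*(a'+d')^2" by (simp add: power2_eq_square algebra_simps)
  have "(a*d - X)^2 = (a'*d' - X')^2" unfolding k1 k2 E1 E2 using E3 by (simp add: mult.commute)
  then have D: "a*d - X = a'*d' - X'" using assms by (simp add: power2_eq_iff_nonneg)
  have "(a+d)^2 = (a^2+X) + (d^2+X) + 2*(a*d - X)" by (simp add: power2_eq_square algebra_simps)
  also have "\<dots> = (a'+d')^2" unfolding E1 E2 D by (simp add: power2_eq_square algebra_simps)
  finally show ?thesis using assms by (simp add: power2_eq_iff_nonneg)
qed

lemma sqrt_unique:
  fixes B C :: "complex^2^2"
  assumes pB: "pos_op B" and pC: "pos_op C" and eq: "B**B = C**C"
  shows "B = C"
proof -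
  define a where "a = Re (B$1$1)"
  define d where "d = Re (B$2$2)"
  define b where "b = B$1$2"
  define a' where "a' = Re (C$1$1)"
  define d' where "d' = Re (C$2$2)"
  define b' where "b' = C$1$2"
  have cB: "0 \<le> a" "0 \<le> d" "cmod b ^2 \<le> a*d" using pB unfolding pos_char a_def d_def b_def by auto
  have cC: "0 \<le> a'" "0 \<le> d'" "cmod b' ^2 \<le> a'*d'" using pC unfolding pos_char a'_def d'_def b'_def by auto
  note sB = sqB[OF pB, folded a_def d_def b_def]
  note sC = sqB[OF pC, folded a'_def d'_def b'_def]
  have E1: "a^2 + cmod b^2 = a'^2 + cmod b'^2" using arg_cong[OF eq, of "\<lambda>M. M$1$1"] sB sC
    by (metis of_real_eq_iff)
  have E2: "d^2 + cmod b^2 = d'^2 + cmod b'^2" using arg_cong[OF eq, of "\<lambda>M. M$2$2"] sB sC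
    by (metis of_real_eq_iff)
  have E12: "of_real (a+d) * b = of_real (a'+d') * b'" using arg_cong[OF eq, of "\<lambda>M. M$1$2"] sB sC
    by metis
  have "cmod (of_real (a+d) * b) ^2 = cmod (of_real (a'+d') * b')^2" using E12 by simp
  then have E3: "(a+d)^2 * cmod b^2 = (a'+d')^2 * cmod b'^2" 
    by (simp only: norm_mult power_mult_distrib norm_of_real power2_abs)
  have T: "a + d = a' + d'" by (rule sq_unique_real[OF cB(3) cC(3) cB(1,2) cC(1,2) E1 E2 E3])
  have eB: "B$1$1 = of_real a" "B$2$2 = of_real d" "B$2$1 = cnj b" "B$1$2 = b"
    using pos_entries[OF pB] by (simp_all add: a_def d_def b_def)
  have eC: "C$1$1 = of_real a'" "C$2$2 = of_real d'" "C$2$1 = cnj b'" "C$1$2 = b'"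
    using pos_entries[OF pC] by (simp_all add: a'_def d'_def b'_def)
  show ?thesis
  proof (cases "a + d = 0")
    case True
    then have "a = 0" "d = 0" "a' = 0" "d' = 0" using T cB cC by linarith+
    then have "b = 0" "b' = 0" using cB cC by auto
    then show ?thesis unfolding mat2_eq eB eC using \<open>a = 0\<close> \<open>d = 0\<close> \<open>a' = 0\<close> \<open>d' = 0\<close> by simp
  next
    case False
    then have "of_real (a+d) \<noteq> (0::complex)" by (simp del: of_real_add)
    then have "b = b'" using E12 T by (metis mult_left_cancel)
    then have "a^2 = a'^2" "d^2 = d'^2" using E1 E2 by simp_all
    then have "a = a'" "d = d'" using cB cC by (simp_all add: power2_eq_iff_nonneg)
    then show ?thesis unfolding mat2_eq eB eC using \<open>b = b'\<close> by simp
  qed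
qed

definition lin2 :: "complex \<Rightarrow> complex \<Rightarrow> complex^2^2 \<Rightarrow> complex^2^2" where
  "lin2 \<alpha> \<beta> A = (\<chi> i j. \<alpha> * A$i$j + \<beta> * (mat 1 :: complex^2^2)$i$j)"
lemma lin2_nth[simp]: "lin2 \<alpha> \<beta> A $1$1 = \<alpha> * A$1$1 + \<beta>" "lin2 \<alpha> \<beta> A $2$2 = \<alpha> * A$2$2 + \<beta>"
  "lin2 \<alpha> \<beta> A $1$2 = \<alpha> * A$1$2" "lin2 \<alpha> \<beta> A $2$1 = \<alpha> * A$2$1"
  by (simp_all add: lin2_def)

lemma sqrt_exists:
  fixes A :: "complex^2^2"
  assumes pA: "pos_op A"
  shows "\<exists>\<alpha> \<beta>. pos_op (lin2 \<alpha> \<beta> A) \<and> lin2 \<alpha> \<beta> A ** lin2 \<alpha> \<beta> A = A"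
proof -
  define a where "a = Re (A$1$1)"
  define d where "d = Re (A$2$2)"
  define b where "b = A$1$2"
  have cA: "0 \<le> a" "0 \<le> d" "cmod b ^2 \<le> a*d" using pA unfolding pos_char a_def d_def b_def by auto
  have eA: "A$1$1 = of_real a" "A$2$2 = of_real d" "A$2$1 = cnj b" "A$1$2 = b"
    using pos_entries[OF pA] by (simp_all add: a_def d_def b_def)
  define s where "s = sqrt (a*d - cmod b^2)"
  define t where "t = sqrt (a + d + 2 * s)"
  have s0: "s \<ge> 0" and s2: "s^2 = a*d - cmod b^2" using cA by (simp_all add: s_def)
  have t0: "t \<ge> 0" and t2: "t^2 = a + d + 2 * s" using cA s0 by (simp_all add: t_def)
  show ?thesis
  proof (cases "t = 0")
    case True
    then have "a + d + 2 * s = 0" using t2 by simp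
    then have "a = 0" "d = 0" using cA s0 by linarith+
    then have "b = 0" using cA by simp
    have z: "lin2 0 0 A = 0" unfolding mat2_eq by simp
    have "pos_op (0::complex^2^2)" unfolding pos_char by simp
    moreover have "A = 0" unfolding mat2_eq eA using \<open>a = 0\<close> \<open>d = 0\<close> \<open>b = 0\<close> by simp
    ultimately show ?thesis using z by (intro exI[of _ 0]) simp
  next
    case False
    then have tp: "t > 0" using t0 by simp
    define B where "B = lin2 (of_real (1/t)) (of_real (s/t)) A"
    have eB: "B$1$1 = of_real ((a+s)/t)" "B$2$2 = of_real ((d+s)/t)"
      "B$1$2 = of_real (1/t) * b" "B$2$1 = cnj (B$1$2)"
      unfolding B_def lin2_nth eA by (simp_all add: add_divide_distrib)
    have reB: "Re (B$1$1) = (a+s)/t" "Re (B$2$2) = (d+s)/t" "cmod (B$1$2) = cmod b / t"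
      unfolding eB using tp by (simp_all add: norm_mult norm_divide)
    have "cmod b ^2 \<le> (a+s)*(d+s)"
    proof -
      have "cmod b^2 \<le> a*d" by (rule cA(3))
      also have "\<dots> \<le> (a+s)*(d+s)" using cA s0 by (simp add: algebra_simps)
      finally show ?thesis .
    qed
    then have "(cmod b / t)^2 \<le> ((a+s)/t) * ((d+s)/t)"
      using tp by (simp add: power_divide divide_right_mono power2_eq_square)
    then have pB: "pos_op B" unfolding pos_char reB using eB cA s0 tp by simp
    note sB = sqB[OF pB, unfolded reB]
    have r1: "((a+s)/t)^2 + (cmod b / t)^2 = a"
    proof -
      have "((a+s)/t)^2 + (cmod b / t)^2 = ((a+s)^2 + cmod b^2) / t^2" by (simp only: power_divide) (rule add_divide_distrib[symmetric])
      also have "(a+s)^2 + cmod b^2 = a * t^2" unfolding t2 using s2 by (simp add: power2_eq_square algebra_simps)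
      finally show ?thesis using tp by simp
    qed
    have r2: "((d+s)/t)^2 + (cmod b / t)^2 = d"
    proof -
      have "((d+s)/t)^2 + (cmod b / t)^2 = ((d+s)^2 + cmod b^2) / t^2" by (simp only: power_divide) (rule add_divide_distrib[symmetric])
      also have "(d+s)^2 + cmod b^2 = d * t^2" unfolding t2 using s2 by (simp add: power2_eq_square algebra_simps)
      finally show ?thesis using tp by simp
    qed
    have r3: "((a+s)/t + (d+s)/t) * (1/t) = 1"
    proof -
      have "((a+s)/t + (d+s)/t) * (1/t) = (a + d + 2 * s) / t^2" using tp by (simp add: power2_eq_square field_simps)
      then show ?thesis unfolding t2[symmetric] using tp by simp
    qed
    have c3: "of_real ((a+s)/t + (d+s)/t) * (of_real (1/t) * b) = b"
      by (simp only: mult.assoc[symmetric] of_real_mult[symmetric] r3) simp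
    have c4: "of_real ((a+s)/t + (d+s)/t) * cnj (of_real (1/t) * b) = cnj b"
      by (simp only: complex_cnj_mult complex_cnj_complex_of_real mult.assoc[symmetric] of_real_mult[symmetric] r3) simp
    have "B ** B = A"
      unfolding mat2_eq sB eA eB(3) r1 r2 c3 c4 by simp
    then show ?thesis using pB unfolding B_def by blast
  qed
qed

lemma op_sqrt_spec:
  fixes A :: "complex^2^2"
  assumes "pos_op A"
  shows "pos_op (op_sqrt A) \<and> op_sqrt A ** op_sqrt A = A"
proof -
  obtain \<alpha> \<beta> where h: "pos_op (lin2 \<alpha> \<beta> A) \<and> lin2 \<alpha> \<beta> A ** lin2 \<alpha> \<beta> A = A"
    using sqrt_exists[OF assms] by blast
  show ?thesis unfolding op_sqrt_def
    by (rule theI[of _ "lin2 \<alpha> \<beta> A"]) (use h sqrt_unique in metis)+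
qed

lemma op_sqrt_eq:
  fixes A B :: "complex^2^2"
  assumes "pos_op B" "B ** B = A"
  shows "op_sqrt A = B"
  unfolding op_sqrt_def
  by (rule the_equality) (use assms sqrt_unique in metis)+

lemma op_sqrt_lin:
  fixes A :: "complex^2^2"
  assumes "pos_op A"
  shows "\<exists>\<alpha> \<beta>. op_sqrt A = lin2 \<alpha> \<beta> A"
  using sqrt_exists[OF assms] op_sqrt_eq by metis


definition perp :: "complex^2 \<Rightarrow> complex^2" where "perp u = vec2 (- cnj (u$2)) (cnj (u$1))"

lemma unit2: "cinner (u::complex^2) u = 1 \<Longrightarrow> cnj (u$1) * u$1 + cnj (u$2) * u$2 = 1"
  by (simp add: cinner2)

lemma perp_proj:
  assumes "cinner u u = 1"
  shows "mat 1 - ketbra u u = ketbra (perp u) (perp u)"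
proof -
  have h: "cnj (u$1) * u$1 + cnj (u$2) * u$2 = 1" using unit2[OF assms] .
  have h1: "1 - u$1 * cnj (u$1) = cnj (u$2) * u$2" using h by (simp add: algebra_simps)
  have h2: "1 - u$2 * cnj (u$2) = cnj (u$1) * u$1" using h by (simp add: algebra_simps)
  show ?thesis unfolding mat2_eq using h1 h2 by (simp add: perp_def algebra_simps)
qed

lemma perp_unit: "cinner u u = 1 \<Longrightarrow> cinner (perp u) (perp u) = 1"
  using unit2[of u] by (simp add: cinner2 perp_def algebra_simps)

lemma expand2:
  assumes "cinner u u = 1"
  shows "w = cinner u w *s u + cinner (perp u) w *s perp u"
proof -
  have h: "cnj (u$1) * u$1 + cnj (u$2) * u$2 = 1" using unit2[OF assms] .
  have e1: "w$1 = (cnj (u$1) * u$1 + cnj (u$2) * u$2) * w$1" using h by simp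
  have e2: "w$2 = (cnj (u$1) * u$1 + cnj (u$2) * u$2) * w$2" using h by simp
  show ?thesis unfolding vec2_eq
    by (simp add: cinner2 perp_def, subst e1, subst e2) (simp add: algebra_simps)
qed

lemma parseval:
  assumes "cinner u u = 1"
  shows "norm w ^2 = cmod (cinner u w)^2 + cmod (cinner (perp u) w)^2"
proof -
  have h: "cnj (u$1) * u$1 + cnj (u$2) * u$2 = 1" using unit2[OF assms] .
  have "complex_of_real (cmod (cinner u w)^2 + cmod (cinner (perp u) w)^2) =
     cinner u w * cnj (cinner u w) + cinner (perp u) w * cnj (cinner (perp u) w)"
    by (simp only: of_real_add complex_norm_square)
  also have "\<dots> = (cnj (u$1) * u$1 + cnj (u$2) * u$2) * (cnj (w$1) * w$1 + cnj (w$2) * w$2)"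
    by (simp add: cinner2 perp_def algebra_simps)
  also have "\<dots> = cinner w w" using h by (simp add: cinner2)
  also have "\<dots> = of_real (norm w ^2)" by (rule cinner_self)
  finally show ?thesis by (simp only: of_real_eq_iff)
qed

lemma kb_mm: "ketbra x y ** ketbra z (w::complex^2) = ketbra (cinner y z *s x) w"
  unfolding mat2_eq by (simp add: mm2 cinner2 algebra_simps)
lemma kb_Am: "(A::complex^2^2) ** ketbra x y = ketbra (A *v x) y"
  unfolding mat2_eq by (simp add: mm2 mv2 algebra_simps)
lemma kb_mA:
  assumes "pos_op (A::complex^2^2)"
  shows "ketbra x y ** A = ketbra x (A *v y)"
proof -
  note e = pos_entries[OF assms]
  show ?thesis unfolding mat2_eq mm2 mv2 ketbra_nth e(3)
    by (subst (1 2 3 4) e(1), subst (1 2 3 4) e(2)) (simp add: algebra_simps)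
qed
lemma kb_mv: "ketbra x y *v (z::complex^2) = cinner y z *s x"
  unfolding vec2_eq by (simp add: mv2 cinner2 algebra_simps)
lemma mv_smult: "(A::complex^2^2) *v (c *s x) = c *s (A *v x)"
  unfolding vec2_eq by (simp add: mv2 algebra_simps)
lemma cinner_smult_r: "cinner x (c *s (y::complex^2)) = c * cinner x y"
  by (simp add: cinner2 algebra_simps)
lemma cinner_smult_l: "cinner (c *s x) (y::complex^2) = cnj c * cinner x y"
  by (simp add: cinner2 algebra_simps)
lemma cinner_cnj: "cinner x (y::complex^2) = cnj (cinner y x)"
  by (simp add: cinner2 algebra_simps)
lemma norm_smult: "norm (c *s (x::complex^2)) = cmod c * norm x"
proof -
  have "norm (c *s x)^2 = (cmod c * norm x)^2"
    unfolding norm2[of "c *s x"] power_mult_distrib norm2[of x] by (simp add: norm_mult power_mult_distrib algebra_simps)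
  then show ?thesis by (simp add: power2_eq_iff_nonneg)
qed
lemma kb_smult: "ketbra (a *s x) (b *s (y::complex^2)) $i$j = a * cnj b * (x$i * cnj (y$j))"
  by simp
lemma pos_Q: "pos_op (ketbra z (z::complex^2))"
  unfolding pos_op_def
proof
  fix x :: "complex^2"
  have "cinner x (ketbra z z *v x) = of_real (cmod (cinner z x)^2)"
    unfolding kb_mv cinner_smult_r complex_norm_square
    by (subst (2) cinner_cnj) simp
  then show "cinner x (ketbra z z *v x) \<in> \<real> \<and> 0 \<le> Re (cinner x (ketbra z z *v x))" by simp
qed
lemma pos_zero: "pos_op (0::complex^2^2)"
  unfolding pos_char by simp
lemma ketbra_zero: "ketbra 0 (0::complex^2) = 0"
  unfolding mat2_eq by simp
lemma mat1_sub_l: "(mat 1 - Q) ** (R::complex^2^2) = R - Q ** R"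
  unfolding mat2_eq by (simp add: mm2 algebra_simps)
lemma mat1_sub_r: "(R::complex^2^2) ** (mat 1 - Q) = R - R ** Q"
  unfolding mat2_eq by (simp add: mm2 algebra_simps)
lemma lin2_mv: "lin2 \<alpha> \<beta> A *v x = \<alpha> *s (A *v x) + \<beta> *s x"
  unfolding vec2_eq by (simp add: mv2 algebra_simps)
lemma opnorm_nonneg: "0 \<le> opnorm (A::complex^2^2)"
  unfolding opnorm_def by (rule onorm_pos_le) (rule matrix_vector_mul_bounded_linear)
lemma opnorm_Q: "opnorm (ketbra z (z::complex^2)) \<le> 2 * norm z ^2"
  unfolding opnorm_def
proof (rule onorm_le)
  fix x :: "complex^2"
  have "cmod (cinner z x) \<le> cmod (z$1) * cmod (x$1) + cmod (z$2) * cmod (x$2)"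
    unfolding cinner2 by (metis complex_mod_cnj norm_mult norm_triangle_ineq)
  also have "\<dots> \<le> norm z * norm x + norm z * norm x"
    by (intro add_mono mult_mono Finite_Cartesian_Product.norm_nth_le) auto
  finally have "cmod (cinner z x) \<le> 2 * norm z * norm x" by (simp add: mult.commute mult.left_commute)
  then have "cmod (cinner z x) * norm z \<le> 2 * norm z * norm x * norm z"
    by (rule mult_right_mono) simp
  then show "norm (ketbra z z *v x) \<le> 2 * norm z ^2 * norm x"
    unfolding kb_mv norm_smult by (simp add: power2_eq_square algebra_simps)
qed


definition kap :: "complex^2 \<Rightarrow> complex^2 \<Rightarrow> real" where
  "kap v z = cmod (cinner v z) / norm z"

lemma vec_eqI2: "(\<And>i. x$i = y$i) \<Longrightarrow> x = y" by (simp add: vec_eq_iff)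

lemma op_sqrt_zero: "op_sqrt (0::complex^2^2) = 0"
  by (rule op_sqrt_eq[OF pos_zero]) simp

lemma sqrt_Q:
  fixes z :: "complex^2"
  assumes "z \<noteq> 0"
  defines "c \<equiv> 1 / sqrt (norm z)"
  shows "op_sqrt (ketbra z z) = ketbra (of_real c *s z) (of_real c *s z)"
proof (rule op_sqrt_eq[OF pos_Q])
  define n where "n = norm z"
  have n0: "n > 0" using assms by (simp add: n_def)
  have cc: "c * c = 1 / n" unfolding c_def n_def[symmetric] using n0
    by (simp add: real_sqrt_mult[symmetric])
  have ncc: "complex_of_real n * of_real c * of_real c = 1"
  proof -
    have "n * c * c = 1" using cc n0 by (simp add: mult.assoc)
    then show ?thesis by (metis of_real_1 of_real_mult)
  qed
  have c0: "c \<ge> 0" unfolding c_def by simp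
  have cy: "cinner (of_real c *s z) (of_real c *s z) = of_real n"
    unfolding cinner_self norm_smult n_def
    using ncc c0 unfolding n_def by (simp add: power2_eq_square algebra_simps)
  show "ketbra (of_real c *s z) (of_real c *s z) ** ketbra (of_real c *s z) (of_real c *s z) = ketbra z z"
    unfolding kb_mm cy
  proof (intro vec_eqI2)
    fix i j
    have "complex_of_real n * (of_real c * z $ i) * cnj (of_real c * z $ j) =
       (complex_of_real n * of_real c * of_real c) * (z $ i * cnj (z $ j))" by (simp add: algebra_simps)
    then show "ketbra (of_real n *s (of_real c *s z)) (of_real c *s z) $ i $ j = ketbra z z $ i $ j"
      unfolding ncc by simp
  qed
qed

lemma Q_iter:
  fixes z v :: "complex^2"
  shows "op_sqrt (ketbra z z) ** ketbra v v ** op_sqrt (ketbra z z) =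
         ketbra (of_real (kap v z) *s z) (of_real (kap v z) *s z)"
proof (cases "z = 0")
  case True then show ?thesis by (simp add: ketbra_zero op_sqrt_zero)
next
  case False
  define n where "n = norm z"
  have n0: "n > 0" using False by (simp add: n_def)
  define c where "c = 1 / sqrt (norm z)"
  have cc: "c * c = 1 / n" unfolding c_def n_def[symmetric] using n0
    by (simp add: real_sqrt_mult[symmetric])
  define y where "y = of_real c *s z"
  have s: "op_sqrt (ketbra z z) = ketbra y y" using sqrt_Q[OF False] by (simp add: c_def y_def)
  define p where "p = cinner v z"
  have e: "ketbra y y ** ketbra v v ** ketbra y y = ketbra (cinner v y *s (cinner y v *s y)) y"
    by (simp add: kb_mm)
  have cvy: "cinner v y = of_real c * p" unfolding y_def p_def cinner_smult_r ..
  have cyv: "cinner y v = of_real c * cnj p" unfolding y_def p_def cinner_smult_l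
    by (subst cinner_cnj) simp
  have kr: "(c*c)*(c*c)*(cmod p)^2 = kap v z * kap v z"
    unfolding cc kap_def p_def[symmetric] n_def[symmetric] by (simp add: power2_eq_square)
  have key: "(of_real c * p) * (of_real c * cnj p) * of_real c * of_real c =
      complex_of_real (kap v z) * of_real (kap v z)"
  proof -
    have "(of_real c * p) * (of_real c * cnj p) * of_real c * of_real c =
       complex_of_real ((c*c)*(c*c)) * (p * cnj p)" by (simp add: algebra_simps)
    also have "\<dots> = complex_of_real ((c*c)*(c*c)*(cmod p)^2)"
      by (simp add: complex_norm_square[symmetric])
    finally show ?thesis unfolding kr by simp
  qed
  show ?thesis unfolding s e cvy cyv
  proof (intro vec_eqI2)
    fix i j
    have "(of_real c * p * (of_real c * cnj p * (of_real c * z $ i))) * cnj (of_real c * z $ j) =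
        ((of_real c * p) * (of_real c * cnj p) * of_real c * of_real c) * (z$i * cnj (z$j))"
      by (simp add: algebra_simps)
    also have "\<dots> = complex_of_real (kap v z) * of_real (kap v z) * (z$i * cnj (z$j))" unfolding key ..
    finally show "ketbra (of_real c * p *s (of_real c * cnj p *s y)) y $ i $ j =
         ketbra (of_real (kap v z) *s z) (of_real (kap v z) *s z) $ i $ j"
      unfolding y_def by (simp add: algebra_simps)
  qed
qed

lemma mv_zero_fun: "((*v) (0::complex^2^2)) = (\<lambda>x. 0)"
  by (rule ext) (simp add: vec2_eq mv2)

theorem lemma2p1:
  fixes u :: "complex^2" and R :: "complex^2^2" and P :: "complex^2^2"
  assumes "cinner u u = 1"
    and "P = ketbra u u"
    and "pos_op R"
  shows "(P ** R \<noteq> R ** P \<longrightarrow>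
            (\<lambda>n. opnorm (Rseq P R n - 0)) \<longlonglongrightarrow> 0)
       \<and> (P ** R = R ** P \<longrightarrow>
            op_sqrt R ** (mat 1 - P) ** op_sqrt R = (mat 1 - P) ** R ** (mat 1 - P)
          \<and> (\<lambda>n. opnorm (Rseq P R n - op_sqrt R ** (mat 1 - P) ** op_sqrt R)) \<longlonglongrightarrow> 0)"
proof -
  define v where "v = perp u"
  define Qv where "Qv = ketbra v v"
  have hP: "mat 1 - P = Qv" using perp_proj[OF assms(1)] assms(2) by (simp add: v_def Qv_def)
  have vv: "cinner v v = 1" using perp_unit[OF assms(1)] by (simp add: v_def)
  have PQ: "P = mat 1 - Qv"
  proof -
    have "P = mat 1 - (mat 1 - P)" by (simp only: diff_diff_eq2 add_diff_cancel_left')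
    then show ?thesis unfolding hP .
  qed
  define S where "S = op_sqrt R"
  have pS: "pos_op S" and SS: "S ** S = R" using op_sqrt_spec[OF assms(3)] by (auto simp: S_def)
  define w where "w = S *v v"
  define k where "k = kap v w"
  have k0: "k \<ge> 0" by (simp add: k_def kap_def)
  have R1: "S ** Qv ** S = ketbra w w" unfolding Qv_def kb_Am kb_mA[OF pS] w_def ..
  have Rn: "Rseq P R (Suc n) = ketbra (of_real (k^n) *s w) (of_real (k^n) *s w)" for n
  proof (induction n)
    case 0
    show ?case using R1 by (simp add: hP S_def[symmetric])
  next
    case (Suc n)
    define z where "z = of_real (k^n) *s w"
    have "Rseq P R (Suc (Suc n)) = ketbra (of_real (kap v z) *s z) (of_real (kap v z) *s z)"
      using Suc.IH Q_iter[of z v] by (simp add: hP Qv_def z_def)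
    also have "of_real (kap v z) *s z = of_real (k^Suc n) *s w"
    proof (cases "k^n = 0")
      case True
      then show ?thesis by (simp add: z_def)
    next
      case False
      then have kn: "k^n > 0" using zero_le_power[OF k0, of n] by linarith
      have "kap v z = k" unfolding kap_def k_def z_def cinner_smult_r norm_smult
        using kn by (simp add: norm_mult)
      then have "of_real (kap v z) *s z = (of_real k * of_real (k^n)) *s w"
        unfolding z_def vector_smult_assoc by simp
      moreover have "complex_of_real k * of_real (k^n) = of_real (k^Suc n)" by simp
      ultimately show ?thesis by simp
    qed
    finally show ?case .
  qed
  have nc: "k < 1" if ne: "P ** R \<noteq> R ** P"
  proof (rule ccontr)
    assume "\<not> k < 1"
    then have k1: "k \<ge> 1" by simp
    have w0: "w \<noteq> 0"
    proof
      assume "w = 0" then have "k = 0" by (simp add: k_def kap_def)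
      with k1 show False by simp
    qed
    then have nw: "norm w > 0" by simp
    have "norm w \<le> cmod (cinner v w)" using k1 nw unfolding k_def kap_def by (simp add: le_divide_eq)
    then have "norm w ^2 \<le> cmod (cinner v w)^2" by (rule power_mono) simp
    then have "cmod (cinner u w)^2 \<le> 0" using parseval[OF assms(1), of w] by (simp add: v_def)
    then have uw: "cinner u w = 0" by simp
    define l where "l = cinner v w"
    have wl: "w = l *s v" using expand2[OF assms(1), of w] uw by (simp add: l_def v_def)
    have "l \<in> \<real>" using pS unfolding pos_op_def l_def w_def by blast
    then obtain r where lr: "l = of_real r" by (metis Reals_cases)
    have Rv: "R *v v = (l*l) *s v"
    proof -
      have "R *v v = S *v (S *v v)" unfolding SS[symmetric] matrix_vector_mul_assoc ..
      also have "\<dots> = (l*l) *s v" unfolding w_def[symmetric] using wl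
        by (metis mv_smult vector_smult_assoc w_def)
      finally show ?thesis .
    qed
    have "R ** Qv = Qv ** R" unfolding Qv_def kb_Am kb_mA[OF assms(3)] Rv
    proof (intro vec_eqI2)
      fix i j show "ketbra ((l * l) *s v) v $ i $ j = ketbra v ((l * l) *s v) $ i $ j"
        by (simp add: lr)
    qed
    then have "P ** R = R ** P" unfolding PQ mat1_sub_l mat1_sub_r by simp
    with ne show False by simp
  qed
  have part1: "(\<lambda>n. opnorm (Rseq P R n - 0)) \<longlonglongrightarrow> 0" if ne: "P ** R \<noteq> R ** P"
  proof (rule LIMSEQ_imp_Suc)
    have k1: "k < 1" using nc[OF ne] .
    have up: "opnorm (Rseq P R (Suc n) - 0) \<le> (2 * norm w ^2) * (k^2)^n" for n
    proof -
      have "opnorm (Rseq P R (Suc n) - 0) \<le> 2 * norm (of_real (k^n) *s w) ^2"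
        unfolding Rn diff_zero by (rule opnorm_Q)
      also have "\<dots> = (2 * norm w ^2) * (k^2)^n"
      proof -
        have ck: "cmod (of_real (k^n)) = k^n" using k0 by (simp only: norm_of_real abs_of_nonneg zero_le_power)
        show ?thesis unfolding norm_smult ck by (simp add: power_mult_distrib power_mult[symmetric] mult.commute)
      qed
      finally show ?thesis .
    qed
    have "(\<lambda>n. (2 * norm w ^2) * (k^2)^n) \<longlonglongrightarrow> (2 * norm w ^2) * 0"
      by (intro tendsto_mult tendsto_const LIMSEQ_power_zero) (use k0 k1 in \<open>simp add: power_less_one_iff abs_square_less_1\<close>)
    then have lim: "(\<lambda>n. (2 * norm w ^2) * (k^2)^n) \<longlonglongrightarrow> 0" by simp
    show "(\<lambda>n. opnorm (Rseq P R (Suc n) - 0)) \<longlonglongrightarrow> 0"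
    proof (rule tendsto_sandwich[OF _ _ tendsto_const lim])
      show "\<forall>\<^sub>F n in sequentially. 0 \<le> opnorm (Rseq P R (Suc n) - 0)"
        using opnorm_nonneg by simp
      show "\<forall>\<^sub>F n in sequentially. opnorm (Rseq P R (Suc n) - 0) \<le> (2 * norm w ^2) * (k^2)^n"
        using up by simp
    qed
  qed
  have part2: "op_sqrt R ** (mat 1 - P) ** op_sqrt R = (mat 1 - P) ** R ** (mat 1 - P)
          \<and> (\<lambda>n. opnorm (Rseq P R n - op_sqrt R ** (mat 1 - P) ** op_sqrt R)) \<longlonglongrightarrow> 0"
    if c: "P ** R = R ** P"
  proof -
    have RQ: "R ** Qv = Qv ** R" using c unfolding PQ mat1_sub_l mat1_sub_r by simp
    define \<mu> where "\<mu> = cinner v (R *v v)"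
    have Qvv: "Qv *v v = v" unfolding Qv_def kb_mv vv by simp
    have Rv: "R *v v = \<mu> *s v"
    proof -
      have "R *v v = R *v (Qv *v v)" unfolding Qvv ..
      also have "\<dots> = Qv *v (R *v v)" unfolding matrix_vector_mul_assoc RQ ..
      also have "\<dots> = \<mu> *s v" unfolding Qv_def kb_mv \<mu>_def ..
      finally show ?thesis .
    qed
    obtain \<alpha> \<beta> where Sl: "S = lin2 \<alpha> \<beta> R" using op_sqrt_lin[OF assms(3)] S_def by blast
    define l where "l = \<alpha> * \<mu> + \<beta>"
    have wl: "w = l *s v" unfolding w_def Sl lin2_mv Rv l_def unfolding vec2_eq by (simp add: algebra_simps)
    have "cinner v (S *v v) \<in> \<real>" using pS unfolding pos_op_def by blast
    moreover have "cinner v (S *v v) = l" unfolding w_def[symmetric] wl cinner_smult_r vv by simp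
    ultimately obtain r where lr: "l = of_real r" by (metis Reals_cases)
    have Rv2: "R *v v = (l*l) *s v"
    proof -
      have "R *v v = S *v (S *v v)" unfolding SS[symmetric] matrix_vector_mul_assoc ..
      also have "\<dots> = (l*l) *s v" unfolding w_def[symmetric] using wl
        by (metis mv_smult vector_smult_assoc w_def)
      finally show ?thesis .
    qed
    have e1: "Qv ** R ** Qv = ketbra (cinner ((l*l) *s v) v *s v) v"
      unfolding Qv_def kb_mA[OF assms(3)] Rv2 kb_mm ..
    have e2: "cinner ((l*l) *s v) v = cnj (l*l)" unfolding cinner_smult_l vv by simp
    have e3: "S ** Qv ** S = ketbra (l *s v) (l *s v)" using R1 wl by simp
    have id: "S ** Qv ** S = Qv ** R ** Qv"
      unfolding e1 e2 e3
    proof (intro vec_eqI2)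
      fix i j show "ketbra (l *s v) (l *s v) $ i $ j = ketbra (cnj (l * l) *s v) v $ i $ j"
        by (simp add: lr algebra_simps)
    qed
    have kw: "ketbra (of_real (k^n) *s w) (of_real (k^n) *s w) = ketbra w w" for n
    proof (cases "w = 0")
      case True then show ?thesis by simp
    next
      case False
      then have l0: "l \<noteq> 0" using wl by auto
      have "complex_of_real (norm v ^2) = of_real 1" using vv cinner_self[of v] by simp
      then have "norm v ^2 = 1^2" by (simp only: of_real_eq_iff power_one)
      then have nv: "norm v = 1" by (simp only: power2_eq_iff_nonneg norm_ge_zero zero_le_one)
      have "k = 1" unfolding k_def kap_def using l0 unfolding wl cinner_smult_r vv norm_smult nv by simp
      then show ?thesis by simp
    qed
    show ?thesis
    proof
      show "op_sqrt R ** (mat 1 - P) ** op_sqrt R = (mat 1 - P) ** R ** (mat 1 - P)"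
        unfolding S_def[symmetric] hP by (rule id)
      show "(\<lambda>n. opnorm (Rseq P R n - op_sqrt R ** (mat 1 - P) ** op_sqrt R)) \<longlonglongrightarrow> 0"
      proof (rule LIMSEQ_imp_Suc)
        have "opnorm (Rseq P R (Suc n) - op_sqrt R ** (mat 1 - P) ** op_sqrt R) = 0" for n
          unfolding S_def[symmetric] hP R1 Rn kw opnorm_def by (simp add: mv_zero_fun onorm_zero)
        then show "(\<lambda>n. opnorm (Rseq P R (Suc n) - op_sqrt R ** (mat 1 - P) ** op_sqrt R)) \<longlonglongrightarrow> 0"
          by simp
      qed
    qed
  qed
  show ?thesis using part1 part2 by blast
qed
end
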